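(* Let $a>0$, $b>0$, let $p\in\mathbb{N}$, and let $t>1$. Then \[ a\gamma + b\ln p + a\psi(t) - b\psi_p(t) > 0 . \]
   Context: $\gamma$ denotes the Euler–Mascheroni constant and $\psi(t)=\Gamma'(t)/\Gamma(t)$ is the digamma function for $t>0$, where $\Gamma$ is Euler's Gamma function. For $p\in\mathbb{N}$ and $t>0$, the $p$-Gamma function is $\Gamma_p(t)=\frac{p!\,p^t}{t(t+1)\cdots(t+p)}$, and $\psi_p(t)=\frac{d}{dt}\ln\Gamma_p(t)=\Gamma_p'(t)/\Gamma_p(t)$. *)

theory Defs
  imports "HOL-Analysis.Analysis"
begin

definition p_Gamma :: "nat \<Rightarrow> real \<Rightarrow> real" where
  "p_Gamma p t = fact p * real p powr t / (\<Prod>k=0..p. (t + real k))"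

definition p_psi :: "nat \<Rightarrow> real \<Rightarrow> real" where
  "p_psi p t = deriv (\<lambda>s. ln (p_Gamma p s)) t"

end

theory Submission
  imports Defs
begin

lemma ln_pG:
  assumes "s > 0" "p \<ge> 1"
  shows "ln (p_Gamma p s) = ln (fact p) + s * ln (real p) - (\<Sum>k=0..p. ln (s + real k))"
proof -
  have pp: "(\<Prod>k=0..p. (s + real k)) > 0" using assms by (intro prod_pos) auto
  have "ln (p_Gamma p s) = ln (fact p * real p powr s) - ln (\<Prod>k=0..p. (s + real k))"
    unfolding p_Gamma_def using pp assms by (subst ln_div) auto
  also have "ln (fact p * real p powr s) = ln (fact p) + s * ln (real p)"
    using assms by (subst ln_mult) auto
  also have "ln (\<Prod>k=0..p. (s + real k)) = (\<Sum>k=0..p. ln (s + real k))"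
    using assms by (subst ln_prod) auto
  finally show ?thesis .
qed

lemma p_psi_eq:
  assumes "t > 0" "p \<ge> 1"
  shows "p_psi p t = ln (real p) - (\<Sum>k=0..p. 1 / (t + real k))"
proof -
  let ?g = "\<lambda>s. ln (fact p) + s * ln (real p) - (\<Sum>k=0..p. ln (s + real k))"
  have d: "(?g has_real_derivative (ln (real p) - (\<Sum>k=0..p. 1 / (t + real k)))) (at t)"
  proof -
    have "((\<lambda>s. \<Sum>k=0..p. ln (s + real k)) has_real_derivative (\<Sum>k=0..p. 1 / (t + real k))) (at t)"
    proof (rule DERIV_sum)
      fix k assume "k \<in> {0..p}"
      have "((\<lambda>s. ln (s + real k)) has_real_derivative (1 / (t + real k) * 1)) (at t)"
        using assms by (intro DERIV_ln_divide[THEN DERIV_chain2] derivative_eq_intros | simp)+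
      then show "((\<lambda>s. ln (s + real k)) has_real_derivative (1 / (t + real k))) (at t)" by simp
    qed
    then show ?thesis using assms by (auto intro!: derivative_eq_intros simp: add_pos_nonneg)
  qed
  have "((\<lambda>s. ln (p_Gamma p s)) has_real_derivative (ln (real p) - (\<Sum>k=0..p. 1 / (t + real k)))) (at t)"
    by (rule has_field_derivative_transform_within_open[OF d, of "{0<..}"]) (use assms ln_pG in auto)
  then show ?thesis unfolding p_psi_def by (rule DERIV_imp_deriv)
qed

theorem lemma3p1:
  fixes a b t :: real and p :: nat
  assumes "a > 0" and "b > 0" and "p \<ge> 1" and "t > 1"
  shows "a * euler_mascheroni + b * ln (real p) + a * Digamma t - b * p_psi p t > 0"
proof -
  have "Digamma (1::real) < Digamma t" using assms by (intro Digamma_real_strict_mono) auto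
  hence h1: "a * (euler_mascheroni + Digamma t) > 0" using assms by simp
  have "(\<Sum>k=0..p. 1 / (t + real k)) > 0" using assms by (intro sum_pos) auto
  hence h2: "b * (\<Sum>k=0..p. 1 / (t + real k)) > 0" using assms by simp
  have e: "p_psi p t = ln (real p) - (\<Sum>k=0..p. 1 / (t + real k))" using p_psi_eq[of t p] assms by simp
  have "a * euler_mascheroni + b * ln (real p) + a * Digamma t - b * p_psi p t
      = a * (euler_mascheroni + Digamma t) + b * (\<Sum>k=0..p. 1 / (t + real k))"
    unfolding e by (simp add: algebra_simps)
  then show ?thesis using h1 h2 by linarith
qed

end
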